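(* Let $F\colon \mathbb{R}^{nm \times nm} \to \mathbb{R}$ be differentiable at $X = A \otimes B$, where $A \in \mathbb{R}^{n \times n}$ and $B \in \mathbb{R}^{m \times m}$ are nonzero matrices. Define $G\colon \mathbb{R}^{n \times n} \to \mathbb{R}$ by $G(A_1) = F(A_1 \otimes B)$. Then $G$ is differentiable at $A$ and \[ \nabla G(A) = \sum_{j=1}^{m} \left(I_n \otimes e_j^{T} B_L^{*}\right) \nabla F(X) \left(I_n \otimes B_R^{*} e_j\right) \] for any $B_L, B_R \in \mathbb{C}^{m \times m}$ with $B = B_L B_R$. Similarly, define $H\colon \mathbb{R}^{m \times m} \to \mathbb{R}$ by $H(B_1) = F(A \otimes B_1)$. Then $H$ is differentiable at $B$ and \[ \nabla H(B) = \sum_{i=1}^{n} \left(e_i^{T} A_L^{*} \otimes I_m\right) \nabla F(X) \left(A_R^{*} e_i \otimes I_m\right) \] for any $A_L, A_R \in \mathbb{C}^{n \times n}$ with $A = A_L A_R$.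
   Context: $\otimes$ denotes the Kronecker product, $e_j$ the $j$th standard unit vector of appropriate size, $I_n$ the $n\times n$ identity, and $(\cdot)^*$ the conjugate transpose. Gradients of real-valued functions of real matrices are taken with respect to the Frobenius inner product $\langle X, Y\rangle_F = \operatorname{trace}(X^T Y)$. *)

theory Defs
  imports "HOL-Analysis.Analysis"
begin

definition kron :: "'a::times ^ 'c ^ 'r \<Rightarrow> 'a ^ 'd ^ 's \<Rightarrow> 'a ^ ('c \<times> 'd) ^ ('r \<times> 's)" where
  "kron M N = (\<chi> p q. M $ fst p $ fst q * N $ snd p $ snd q)"

definition cnj_transpose :: "complex ^ 'c ^ 'r \<Rightarrow> complex ^ 'r ^ 'c" where
  "cnj_transpose M = (\<chi> i j. cnj (M $ j $ i))"

definition cmat :: "real ^ 'c ^ 'r \<Rightarrow> complex ^ 'c ^ 'r" where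
  "cmat M = (\<chi> i j. complex_of_real (M $ i $ j))"

text \<open>Gradient of a real-valued function w.r.t. the Frobenius inner product
  (the inner product of the type real^'c^'r is exactly the Frobenius one).\<close>
definition grad :: "('v::real_inner \<Rightarrow> real) \<Rightarrow> 'v \<Rightarrow> 'v" where
  "grad f x = (SOME g. (f has_derivative (\<lambda>h. g \<bullet> h)) (at x))"

definition drop_unit2 :: "'a ^ ('n \<times> 1) ^ ('n \<times> 1) \<Rightarrow> 'a ^ 'n ^ 'n" where
  "drop_unit2 M = (\<chi> i j. M $ (i, 1) $ (j, 1))"

definition drop_unit1 :: "'a ^ (1 \<times> 'm) ^ (1 \<times> 'm) \<Rightarrow> 'a ^ 'm ^ 'm" where
  "drop_unit1 M = (\<chi> i j. M $ (1, i) $ (1, j))"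

end

theory Submission
  imports Defs
begin

lemma grad_char:
  fixes f :: "'v::euclidean_space \<Rightarrow> real"
  assumes "(f has_derivative (\<lambda>h. g \<bullet> h)) (at x)"
  shows "grad f x = g"
proof -
  have ex: "\<exists>g. (f has_derivative (\<lambda>h. g \<bullet> h)) (at x)" using assms by blast
  have d: "(f has_derivative (\<lambda>h. grad f x \<bullet> h)) (at x)"
    unfolding grad_def by (rule someI_ex[OF ex])
  have "(\<lambda>h. grad f x \<bullet> h) = (\<lambda>h. g \<bullet> h)" by (rule has_derivative_unique[OF d assms])
  then have "grad f x \<bullet> (grad f x - g) = g \<bullet> (grad f x - g)" by metis
  then have "(grad f x - g) \<bullet> (grad f x - g) = 0" by (simp add: inner_diff_left)
  then show ?thesis by simp
qed

lemma grad_works: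
  fixes f :: "'v::euclidean_space \<Rightarrow> real"
  assumes "f differentiable (at x)"
  shows "(f has_derivative (\<lambda>h. grad f x \<bullet> h)) (at x)"
proof -
  obtain D where D: "(f has_derivative D) (at x)" using assms differentiable_def by blast
  then have "linear D" using has_derivative_linear by blast
  then have "D = (\<lambda>h. adjoint D 1 \<bullet> h)"
    using adjoint_works[of D] by (auto simp: inner_commute fun_eq_iff)
  with D have "(f has_derivative (\<lambda>h. adjoint D 1 \<bullet> h)) (at x)" by simp
  then show ?thesis using grad_char by metis
qed

lemma kron_lin1: "bounded_linear (\<lambda>A1::real^'n^'n. kron A1 (B::real^'m^'m))"
  apply (simp only: linear_conv_bounded_linear[symmetric])
  apply (rule linearI) by (auto simp: kron_def vec_eq_iff algebra_simps)

lemma kron_lin2: "bounded_linear (\<lambda>B1::real^'m^'m. kron (A::real^'n^'n) B1)"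
  apply (simp only: linear_conv_bounded_linear[symmetric])
  apply (rule linearI) by (auto simp: kron_def vec_eq_iff algebra_simps)

lemma inner_mat: "(x::real^'c^'r) \<bullet> y = (\<Sum>i\<in>UNIV. \<Sum>j\<in>UNIV. x$i$j * y$i$j)"
  by (simp add: inner_vec_def)

lemma sum_pair: "(\<Sum>p\<in>(UNIV::('a::finite\<times>'b::finite) set). f p) = (\<Sum>a\<in>UNIV. \<Sum>b\<in>UNIV. f (a,b))"
proof -
  have "(\<Sum>p\<in>(UNIV::('a\<times>'b) set). f p) = (\<Sum>p\<in>(UNIV::'a set) \<times> (UNIV::'b set). f p)"
    by (simp only: UNIV_Times_UNIV)
  also have "\<dots> = (\<Sum>a\<in>UNIV. \<Sum>b\<in>UNIV. f (a,b))"
    by (subst sum.cartesian_product) simp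
  finally show ?thesis .
qed

lemma rot3: "(\<Sum>b\<in>B. \<Sum>l\<in>L. \<Sum>c\<in>C. f b l c) = (\<Sum>c\<in>C. \<Sum>b\<in>B. \<Sum>l\<in>L. f b l c)"
proof -
  have "(\<Sum>b\<in>B. \<Sum>l\<in>L. \<Sum>c\<in>C. f b l c) = (\<Sum>b\<in>B. \<Sum>c\<in>C. \<Sum>l\<in>L. f b l c)"
    by (rule sum.cong[OF refl], rule sum.swap)
  also have "\<dots> = (\<Sum>c\<in>C. \<Sum>b\<in>B. \<Sum>l\<in>L. f b l c)" by (rule sum.swap)
  finally show ?thesis .
qed

lemma innerG: "(g::real^('n::finite\<times>'m::finite)^('n\<times>'m)) \<bullet> kron h B
   = (\<chi> i j. \<Sum>k\<in>UNIV. \<Sum>l\<in>UNIV. g$(i,k)$(j,l) * B$k$l) \<bullet> h"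
  unfolding inner_mat sum_pair kron_def
  apply (simp add: sum_distrib_left sum_distrib_right)
  apply (rule sum.cong[OF refl])
  subgoal for x
    apply (rule trans[OF sum.swap])
    by (simp add: mult_ac)
  done

lemma if10_mult[simp]: "(if P then 1 else 0) * (x::'a::semiring_1) = (if P then x else 0)" by simp
lemma mult_if10[simp]: "(x::'a::semiring_1) * (if P then 1 else 0) = (if P then x else 0)" by simp

lemma e1: "((rowvector (axis j 1) :: complex ^ 'm ^ 1) ** cnj_transpose BL) $ u $ k = cnj (BL$k$j)"
  by (simp add: matrix_matrix_mult_def rowvector_def axis_def cnj_transpose_def)

lemma e2: "(cnj_transpose BR ** (columnvector (axis j 1) :: complex ^ 1 ^ 'm)) $ l $ u = cnj (BR$j$l)"
  by (simp add: matrix_matrix_mult_def columnvector_def axis_def cnj_transpose_def)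

lemma mm3: "(P ** M ** Q) $ x $ y = (\<Sum>r\<in>UNIV. (\<Sum>q\<in>UNIV. P$x$q * M$q$r) * Q$r$y)"
  by (simp add: matrix_matrix_mult_def)

lemma ifmult1: "(if P then (x::'a::semiring_0) else 0) * y = (if P then x*y else 0)" by simp
lemma ifmult2: "y * (if P then (x::'a::semiring_0) else 0) = (if P then y*x else 0)" by simp
lemma sum_if0: "(\<Sum>k\<in>A. if P then f k else (0::'a::comm_monoid_add)) = (if P then sum f A else 0)" by simp

lemma KIK:
  fixes X :: "'a::comm_ring_1^'m^'u" and Y :: "'a^'v^'m" and M :: "'a^('n::finite\<times>'m::finite)^('n\<times>'m)"
  shows "(kron (mat 1 :: 'a^'n^'n) X ** M ** kron (mat 1 :: 'a^'n^'n) Y) $ (i,u) $ (i',v)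
     = (\<Sum>l\<in>UNIV. (\<Sum>k\<in>UNIV. X$u$k * M$(i,k)$(i',l)) * Y$l$v)"
  unfolding mm3 sum_pair
  apply (simp only: kron_def vec_lambda_beta fst_conv snd_conv mat_def if10_mult ifmult1 ifmult2 sum_if0 sum.delta sum.delta' mult_if10)
  apply simp
  done

lemma rev3: "(\<Sum>j\<in>J. \<Sum>l\<in>L. \<Sum>k\<in>K. f j l k) = (\<Sum>k\<in>K. \<Sum>l\<in>L. \<Sum>j\<in>J. f j l k)"
proof -
  have "(\<Sum>j\<in>J. \<Sum>l\<in>L. \<Sum>k\<in>K. f j l k) = (\<Sum>l\<in>L. \<Sum>j\<in>J. \<Sum>k\<in>K. f j l k)"
    by (rule sum.swap)
  also have "\<dots> = (\<Sum>l\<in>L. \<Sum>k\<in>K. \<Sum>j\<in>J. f j l k)"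
    by (rule sum.cong[OF refl], rule sum.swap)
  also have "\<dots> = (\<Sum>k\<in>K. \<Sum>l\<in>L. \<Sum>j\<in>J. f j l k)" by (rule sum.swap)
  finally show ?thesis .
qed

lemma M1:
  fixes g :: "real^('n::finite\<times>'m::finite)^('n\<times>'m)" and B :: "real^'m^'m"
  assumes "cmat B = BL ** BR"
  shows "drop_unit2 (\<Sum>j\<in>UNIV.
            kron (mat 1 :: complex ^ 'n ^ 'n)
                 ((rowvector (axis j 1) :: complex ^ 'm ^ 1) ** cnj_transpose BL)
            ** cmat g
            ** kron (mat 1 :: complex ^ 'n ^ 'n)
                 (cnj_transpose BR ** (columnvector (axis j 1) :: complex ^ 1 ^ 'm)))
       = cmat (\<chi> i j. \<Sum>k\<in>UNIV. \<Sum>l\<in>UNIV. g$(i,k)$(j,l) * B$k$l)"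
proof -
  have Bkl: "complex_of_real (B$k$l) = (\<Sum>j\<in>UNIV. cnj (BL$k$j) * cnj (BR$j$l))" for k l
  proof -
    have h: "complex_of_real (B$k$l) = (\<Sum>j\<in>UNIV. BL$k$j * BR$j$l)"
      using arg_cong[OF assms, of "\<lambda>M. M$k$l"] by (simp add: cmat_def matrix_matrix_mult_def)
    have "complex_of_real (B$k$l) = cnj (\<Sum>j\<in>UNIV. BL$k$j * BR$j$l)"
      by (metis h complex_cnj_complex_of_real)
    then show ?thesis by simp
  qed
  have "drop_unit2 (\<Sum>j\<in>UNIV.
            kron (mat 1 :: complex ^ 'n ^ 'n)
                 ((rowvector (axis j 1) :: complex ^ 'm ^ 1) ** cnj_transpose BL)
            ** cmat g
            ** kron (mat 1 :: complex ^ 'n ^ 'n)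
                 (cnj_transpose BR ** (columnvector (axis j 1) :: complex ^ 1 ^ 'm))) $ i $ i'
       = cmat (\<chi> i j. \<Sum>k\<in>UNIV. \<Sum>l\<in>UNIV. g$(i,k)$(j,l) * B$k$l) $ i $ i'" for i i'
  proof -
    have "drop_unit2 (\<Sum>j\<in>UNIV.
            kron (mat 1 :: complex ^ 'n ^ 'n)
                 ((rowvector (axis j 1) :: complex ^ 'm ^ 1) ** cnj_transpose BL)
            ** cmat g
            ** kron (mat 1 :: complex ^ 'n ^ 'n)
                 (cnj_transpose BR ** (columnvector (axis j 1) :: complex ^ 1 ^ 'm))) $ i $ i'
      = (\<Sum>j\<in>UNIV. \<Sum>l\<in>UNIV. (\<Sum>k\<in>UNIV. cnj (BL$k$j) * complex_of_real (g$(i,k)$(i',l))) * cnj (BR$j$l))"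
      by (simp only: drop_unit2_def vec_lambda_beta sum_component KIK e1 e2 cmat_def)
    also have "\<dots> = (\<Sum>j\<in>UNIV. \<Sum>l\<in>UNIV. \<Sum>k\<in>UNIV. complex_of_real (g$(i,k)$(i',l)) * (cnj (BL$k$j) * cnj (BR$j$l)))"
      by (simp add: sum_distrib_right sum_distrib_left mult_ac)
    also have "\<dots> = (\<Sum>k\<in>UNIV. \<Sum>l\<in>UNIV. \<Sum>j\<in>UNIV. complex_of_real (g$(i,k)$(i',l)) * (cnj (BL$k$j) * cnj (BR$j$l)))"
      by (rule rev3)
    also have "\<dots> = cmat (\<chi> i j. \<Sum>k\<in>UNIV. \<Sum>l\<in>UNIV. g$(i,k)$(j,l) * B$k$l) $ i $ i'"
      by (simp add: cmat_def Bkl sum_distrib_left)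
    finally show ?thesis .
  qed
  then show ?thesis by (simp add: vec_eq_iff)
qed

lemma KIK2:
  fixes X :: "'a::comm_ring_1^'n^'u" and Y :: "'a^'v^'n" and M :: "'a^('n::finite\<times>'m::finite)^('n\<times>'m)"
  shows "(kron X (mat 1 :: 'a^'m^'m) ** M ** kron Y (mat 1 :: 'a^'m^'m)) $ (u,k) $ (v,l)
     = (\<Sum>b\<in>UNIV. (\<Sum>a\<in>UNIV. X$u$a * M$(a,k)$(b,l)) * Y$b$v)"
  unfolding mm3 sum_pair
  apply (simp only: kron_def vec_lambda_beta fst_conv snd_conv mat_def if10_mult ifmult1 ifmult2 sum_if0 sum.delta sum.delta' mult_if10)
  apply simp
  done

lemma perm4: "(\<Sum>a\<in>A. \<Sum>k\<in>K. \<Sum>b\<in>B. \<Sum>l\<in>L. f a k b l) = (\<Sum>k\<in>K. \<Sum>l\<in>L. \<Sum>a\<in>A. \<Sum>b\<in>B. f a k b l)"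
proof -
  have "(\<Sum>a\<in>A. \<Sum>k\<in>K. \<Sum>b\<in>B. \<Sum>l\<in>L. f a k b l) = (\<Sum>k\<in>K. \<Sum>a\<in>A. \<Sum>b\<in>B. \<Sum>l\<in>L. f a k b l)"
    by (rule sum.swap)
  also have "\<dots> = (\<Sum>k\<in>K. \<Sum>a\<in>A. \<Sum>l\<in>L. \<Sum>b\<in>B. f a k b l)"
    by (rule sum.cong[OF refl], rule sum.cong[OF refl], rule sum.swap)
  also have "\<dots> = (\<Sum>k\<in>K. \<Sum>l\<in>L. \<Sum>a\<in>A. \<Sum>b\<in>B. f a k b l)"
    by (rule sum.cong[OF refl], rule sum.swap)
  finally show ?thesis .
qed

lemma innerH: "(g::real^('n::finite\<times>'m::finite)^('n\<times>'m)) \<bullet> kron A h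
   = (\<chi> k l. \<Sum>a\<in>UNIV. \<Sum>b\<in>UNIV. g$(a,k)$(b,l) * A$a$b) \<bullet> h"
proof -
  have "g \<bullet> kron A h = (\<Sum>a\<in>UNIV. \<Sum>k\<in>UNIV. \<Sum>b\<in>UNIV. \<Sum>l\<in>UNIV. g$(a,k)$(b,l) * A$a$b * h$k$l)"
    unfolding inner_mat sum_pair kron_def by (simp add: mult_ac)
  also have "\<dots> = (\<Sum>k\<in>UNIV. \<Sum>l\<in>UNIV. \<Sum>a\<in>UNIV. \<Sum>b\<in>UNIV. g$(a,k)$(b,l) * A$a$b * h$k$l)"
    by (rule perm4)
  also have "\<dots> = (\<chi> k l. \<Sum>a\<in>UNIV. \<Sum>b\<in>UNIV. g$(a,k)$(b,l) * A$a$b) \<bullet> h"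
    unfolding inner_mat by (simp add: sum_distrib_right)
  finally show ?thesis .
qed

lemma M2:
  fixes g :: "real^('n::finite\<times>'m::finite)^('n\<times>'m)" and A :: "real^'n^'n"
  assumes "cmat A = XL ** XR"
  shows "drop_unit1 (\<Sum>i\<in>UNIV.
            kron ((rowvector (axis i 1) :: complex ^ 'n ^ 1) ** cnj_transpose XL)
                 (mat 1 :: complex ^ 'm ^ 'm)
            ** cmat g
            ** kron (cnj_transpose XR ** (columnvector (axis i 1) :: complex ^ 1 ^ 'n))
                 (mat 1 :: complex ^ 'm ^ 'm))
       = cmat (\<chi> k l. \<Sum>a\<in>UNIV. \<Sum>b\<in>UNIV. g$(a,k)$(b,l) * A$a$b)"
proof -
  have Aab: "complex_of_real (A$a$b) = (\<Sum>j\<in>UNIV. cnj (XL$a$j) * cnj (XR$j$b))" for a b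
  proof -
    have h: "complex_of_real (A$a$b) = (\<Sum>j\<in>UNIV. XL$a$j * XR$j$b)"
      using arg_cong[OF assms, of "\<lambda>M. M$a$b"] by (simp add: cmat_def matrix_matrix_mult_def)
    have "complex_of_real (A$a$b) = cnj (\<Sum>j\<in>UNIV. XL$a$j * XR$j$b)"
      by (metis h complex_cnj_complex_of_real)
    then show ?thesis by simp
  qed
  have "drop_unit1 (\<Sum>i\<in>UNIV.
            kron ((rowvector (axis i 1) :: complex ^ 'n ^ 1) ** cnj_transpose XL)
                 (mat 1 :: complex ^ 'm ^ 'm)
            ** cmat g
            ** kron (cnj_transpose XR ** (columnvector (axis i 1) :: complex ^ 1 ^ 'n))
                 (mat 1 :: complex ^ 'm ^ 'm)) $ k $ l
       = cmat (\<chi> k l. \<Sum>a\<in>UNIV. \<Sum>b\<in>UNIV. g$(a,k)$(b,l) * A$a$b) $ k $ l" for k l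
  proof -
    have "drop_unit1 (\<Sum>i\<in>UNIV.
            kron ((rowvector (axis i 1) :: complex ^ 'n ^ 1) ** cnj_transpose XL)
                 (mat 1 :: complex ^ 'm ^ 'm)
            ** cmat g
            ** kron (cnj_transpose XR ** (columnvector (axis i 1) :: complex ^ 1 ^ 'n))
                 (mat 1 :: complex ^ 'm ^ 'm)) $ k $ l
      = (\<Sum>i\<in>UNIV. \<Sum>b\<in>UNIV. (\<Sum>a\<in>UNIV. cnj (XL$a$i) * complex_of_real (g$(a,k)$(b,l))) * cnj (XR$i$b))"
      by (simp only: drop_unit1_def vec_lambda_beta sum_component KIK2 e1 e2 cmat_def)
    also have "\<dots> = (\<Sum>i\<in>UNIV. \<Sum>b\<in>UNIV. \<Sum>a\<in>UNIV. complex_of_real (g$(a,k)$(b,l)) * (cnj (XL$a$i) * cnj (XR$i$b)))"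
      by (simp add: sum_distrib_right sum_distrib_left mult_ac)
    also have "\<dots> = (\<Sum>a\<in>UNIV. \<Sum>b\<in>UNIV. \<Sum>i\<in>UNIV. complex_of_real (g$(a,k)$(b,l)) * (cnj (XL$a$i) * cnj (XR$i$b)))"
      by (rule rev3)
    also have "\<dots> = cmat (\<chi> k l. \<Sum>a\<in>UNIV. \<Sum>b\<in>UNIV. g$(a,k)$(b,l) * A$a$b) $ k $ l"
      by (simp add: cmat_def Aab sum_distrib_left)
    finally show ?thesis .
  qed
  then show ?thesis by (simp add: vec_eq_iff)
qed

theorem lemma3p2:
  fixes F :: "real ^ ('n::finite \<times> 'm::finite) ^ ('n \<times> 'm) \<Rightarrow> real"
    and A :: "real ^ 'n ^ 'n" and B :: "real ^ 'm ^ 'm"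
  assumes "A \<noteq> 0" and "B \<noteq> 0"
    and "F differentiable (at (kron A B))"
  shows "(\<lambda>A1. F (kron A1 B)) differentiable (at A)
    \<and> (\<forall>BL BR :: complex ^ 'm ^ 'm. cmat B = BL ** BR \<longrightarrow>
         cmat (grad (\<lambda>A1. F (kron A1 B)) A) =
         drop_unit2 (\<Sum>j\<in>UNIV.
            kron (mat 1 :: complex ^ 'n ^ 'n)
                 ((rowvector (axis j 1) :: complex ^ 'm ^ 1) ** cnj_transpose BL)
            ** cmat (grad F (kron A B))
            ** kron (mat 1 :: complex ^ 'n ^ 'n)
                 (cnj_transpose BR ** (columnvector (axis j 1) :: complex ^ 1 ^ 'm))))
    \<and> (\<lambda>B1. F (kron A B1)) differentiable (at B)
    \<and> (\<forall>AL AR :: complex ^ 'n ^ 'n. cmat A = AL ** AR \<longrightarrow>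
         cmat (grad (\<lambda>B1. F (kron A B1)) B) =
         drop_unit1 (\<Sum>i\<in>UNIV.
            kron ((rowvector (axis i 1) :: complex ^ 'n ^ 1) ** cnj_transpose AL)
                 (mat 1 :: complex ^ 'm ^ 'm)
            ** cmat (grad F (kron A B))
            ** kron (cnj_transpose AR ** (columnvector (axis i 1) :: complex ^ 1 ^ 'n))
                 (mat 1 :: complex ^ 'm ^ 'm)))"
proof -
  define g where "g = grad F (kron A B)"
  have dF: "(F has_derivative (\<lambda>h. g \<bullet> h)) (at (kron A B))"
    unfolding g_def by (rule grad_works[OF assms(3)])
  define gG :: "real^'n^'n" where "gG = (\<chi> i j. \<Sum>k\<in>UNIV. \<Sum>l\<in>UNIV. g$(i,k)$(j,l) * B$k$l)"
  define gH :: "real^'m^'m" where "gH = (\<chi> k l. \<Sum>a\<in>UNIV. \<Sum>b\<in>UNIV. g$(a,k)$(b,l) * A$a$b)"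
  have k1: "((\<lambda>A1. kron A1 B) has_derivative (\<lambda>A1. kron A1 B)) (at A)"
    by (rule bounded_linear_imp_has_derivative[OF kron_lin1])
  have k2: "((\<lambda>B1. kron A B1) has_derivative (\<lambda>B1. kron A B1)) (at B)"
    by (rule bounded_linear_imp_has_derivative[OF kron_lin2])
  have "((F \<circ> (\<lambda>A1. kron A1 B)) has_derivative ((\<lambda>h. g \<bullet> h) \<circ> (\<lambda>A1. kron A1 B))) (at A)"
    by (rule diff_chain_at[OF k1]) (simp add: dF)
  then have dG: "((\<lambda>A1. F (kron A1 B)) has_derivative (\<lambda>h. gG \<bullet> h)) (at A)"
    by (simp add: o_def innerG gG_def)
  have "((F \<circ> (\<lambda>B1. kron A B1)) has_derivative ((\<lambda>h. g \<bullet> h) \<circ> (\<lambda>B1. kron A B1))) (at B)"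
    by (rule diff_chain_at[OF k2]) (simp add: dF)
  then have dH: "((\<lambda>B1. F (kron A B1)) has_derivative (\<lambda>h. gH \<bullet> h)) (at B)"
    by (simp add: o_def innerH gH_def)
  have G1: "grad (\<lambda>A1. F (kron A1 B)) A = gG" by (rule grad_char[OF dG])
  have H1: "grad (\<lambda>B1. F (kron A B1)) B = gH" by (rule grad_char[OF dH])
  have c1: "(\<lambda>A1. F (kron A1 B)) differentiable (at A)" using dG by (rule differentiableI)
  have c3: "(\<lambda>B1. F (kron A B1)) differentiable (at B)" using dH by (rule differentiableI)
  show ?thesis
    unfolding G1 H1 g_def[symmetric] gG_def gH_def
    apply (intro conjI allI impI c1 c3)
     apply (rule M1[symmetric], assumption)
    apply (rule M2[symmetric], assumption)
    done
qed

end
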